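(* Let $G=\langle a,t\mid ta^2t^{-1}=a^3\rangle$ be the Baumslag--Solitar group $BS(2,3)$ with generating set $\{a,t\}$. Then the growth rate of $G$ is bounded below by $\frac{1+\sqrt{13}}{2}$.
   Context: For a group $G$ generated by a finite set $S$, let $\gamma(n)=\#\{x\in G:\|x\|_S\leq n\}$, where $\|\cdot\|_S$ is the word length with respect to $S\cup S^{-1}$. The growth rate of $G$ with respect to $S$ is $\lim_{n\to\infty}\gamma(n)^{1/n}$. *)

theory Defs
  imports Complex_Main
begin

text \<open>The Baumslag--Solitar group BS(2,3) = < a, t | t a^2 t^-1 = a^3 >,
  realised as words over the letters a, a^-1, t, t^-1 modulo the congruence
  generated by free cancellation and the defining relator.\<close>

datatype gen = A | T

type_synonym letter = "gen \<times> bool"   \<comment> \<open>(g, True) = g, (g, False) = g^-1\<close>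
type_synonym word = "letter list"

definition inv_letter :: "letter \<Rightarrow> letter" where
  "inv_letter x = (fst x, \<not> snd x)"

definition inv_word :: "word \<Rightarrow> word" where
  "inv_word w = rev (map inv_letter w)"

definition bs_relator :: word where
  "bs_relator = [(T,True),(A,True),(A,True),(T,False),(A,False),(A,False),(A,False)]"

definition bs_trivial :: "word set" where
  "bs_trivial = {[x, inv_letter x] | x. True} \<union> {bs_relator, inv_word bs_relator}"

inductive bs_eq :: "word \<Rightarrow> word \<Rightarrow> bool" where
  bs_refl: "bs_eq w w"
| bs_sym: "bs_eq u v \<Longrightarrow> bs_eq v u"
| bs_trans: "bs_eq u v \<Longrightarrow> bs_eq v w \<Longrightarrow> bs_eq u w"
| bs_del: "r \<in> bs_trivial \<Longrightarrow> bs_eq (u @ r @ v) (u @ v)"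

definition bs_rel :: "(word \<times> word) set" where
  "bs_rel = {(u, v). bs_eq u v}"

definition BS23 :: "word set set" where
  "BS23 = UNIV // bs_rel"

definition bs_word_length :: "word set \<Rightarrow> nat" where
  "bs_word_length x = (LEAST k. \<exists>w \<in> x. length w = k)"

definition bs_growth :: "nat \<Rightarrow> nat" where
  "bs_growth n = card {x \<in> BS23. bs_word_length x \<le> n}"

end

theory Submission
  imports Defs
begin


type_synonym st = "int \<times> (bool \<times> int) list"

definition okr :: "bool \<times> int \<Rightarrow> bool" where
  "okr x = (if fst x then snd x \<in> {0,1} else snd x \<in> {-1,0,1})"

fun adm :: "(bool \<times> int) list \<Rightarrow> bool" where
  "adm [] = True"
| "adm (x # L) = (okr x \<and> (snd x = 0 \<longrightarrow> (case L of [] \<Rightarrow> True | y # _ \<Rightarrow> fst y = fst x)) \<and> adm L)"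

definition tmove :: "st \<Rightarrow> st" where
  "tmove s = (case s of (k, L) \<Rightarrow>
     (if k mod 2 = 0 \<and> L \<noteq> [] \<and> \<not> fst (hd L) then (3 * (k div 2) + snd (hd L), tl L)
      else (3 * (k div 2), (True, k mod 2) # L)))"

definition tinv :: "st \<Rightarrow> st" where
  "tinv s = (case s of (k, L) \<Rightarrow>
     (if k - 3 * ((k+1) div 3) = 0 \<and> L \<noteq> [] \<and> fst (hd L) then (2 * ((k+1) div 3) + snd (hd L), tl L)
      else (2 * ((k+1) div 3), (False, k - 3 * ((k+1) div 3)) # L)))"

fun actl :: "letter \<Rightarrow> st \<Rightarrow> st" where
  "actl (A, True) (k, L) = (k + 1, L)"
| "actl (A, False) (k, L) = (k - 1, L)"
| "actl (T, True) s = tmove s"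
| "actl (T, False) s = tinv s"

definition act :: "word \<Rightarrow> st \<Rightarrow> st" where
  "act w s = foldr actl w s"

lemma act_append: "act (u @ v) s = act u (act v s)"
  by (simp add: act_def)

lemma div2_aux: "r \<in> {0,1} \<Longrightarrow> (2 * q + r) div 2 = (q::int) \<and> (2 * q + r) mod 2 = r"
  by (elim insertE) auto

lemma div3_aux: "r \<in> {-1,0,1} \<Longrightarrow> (3 * q + r + 1) div 3 = (q::int)"
  by (elim insertE) auto

lemma tinv_eq1: "tinv (3 * q, (True, r1) # L') = (2 * q + r1, L')"
proof -
  have "(3 * q + 1) div 3 = q" using div3_aux[of 0 q] by simp
  then show ?thesis by (simp add: tinv_def)
qed

lemma tinv_eq2: "r \<in> {-1,0,1} \<Longrightarrow> \<not> (r = 0 \<and> L \<noteq> [] \<and> fst (hd L)) \<Longrightarrow>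
   tinv (3 * q + r, L) = (2 * q, (False, r) # L)"
proof -
  assume r: "r \<in> {-1,0,1}" and c: "\<not> (r = 0 \<and> L \<noteq> [] \<and> fst (hd L))"
  have d: "(3 * q + r + 1) div 3 = q" using div3_aux[OF r] .
  have e: "3 * q + r - 3 * ((3 * q + r + 1) div 3) = r" by (simp add: d)
  show ?thesis unfolding tinv_def using c by (simp only: prod.case e d) auto
qed

lemma tmove_eq1: "tmove (2 * q, (False, r1) # L') = (3 * q + r1, L')"
  by (simp add: tmove_def)

lemma tmove_eq2: "r \<in> {0,1} \<Longrightarrow> \<not> (r = 0 \<and> L \<noteq> [] \<and> \<not> fst (hd L)) \<Longrightarrow>
   tmove (2 * q + r, L) = (3 * q, (True, r) # L)"
proof -
  assume r: "r \<in> {0,1}" and c: "\<not> (r = 0 \<and> L \<noteq> [] \<and> \<not> fst (hd L))"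
  have d: "(2 * q + r) div 2 = q" "(2 * q + r) mod 2 = r" using div2_aux[OF r] by auto
  show ?thesis unfolding tmove_def using c by (simp only: prod.case d) auto
qed

lemma tmove_cases:
  assumes c1: "\<And>q r1 L'. k = 2 * q \<Longrightarrow> L = (False, r1) # L' \<Longrightarrow> P (3 * q + r1, L')"
    and c2: "\<And>q r. k = 2 * q + r \<Longrightarrow> r \<in> {0,1} \<Longrightarrow> \<not> (r = 0 \<and> L \<noteq> [] \<and> \<not> fst (hd L)) \<Longrightarrow> P (3 * q, (True, r) # L)"
  shows "P (tmove (k, L))"
proof -
  define q where "q = k div 2"
  define r where "r = k mod 2"
  have k: "k = 2 * q + r" by (simp add: q_def r_def)
  have r: "r \<in> {0,1}" unfolding r_def by auto
  show ?thesis
  proof (cases "r = 0 \<and> L \<noteq> [] \<and> \<not> fst (hd L)")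
    case True
    then obtain r1 L' where L: "L = (False, r1) # L'" by (cases L) auto
    have "k = 2 * q" using k True by simp
    then show ?thesis using c1[OF _ L] L tmove_eq1 by simp
  next
    case False
    then show ?thesis using c2[OF k r False] tmove_eq2[OF r False] k by simp
  qed
qed

lemma tinv_cases:
  assumes c1: "\<And>q r1 L'. k = 3 * q \<Longrightarrow> L = (True, r1) # L' \<Longrightarrow> P (2 * q + r1, L')"
    and c2: "\<And>q r. k = 3 * q + r \<Longrightarrow> r \<in> {-1,0,1} \<Longrightarrow> \<not> (r = 0 \<and> L \<noteq> [] \<and> fst (hd L)) \<Longrightarrow> P (2 * q, (False, r) # L)"
  shows "P (tinv (k, L))"
proof -
  define q where "q = (k + 1) div 3"
  define r where "r = k - 3 * q"
  have k: "k = 3 * q + r" by (simp add: r_def)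
  have r: "r \<in> {-1,0,1}" unfolding r_def q_def by auto
  show ?thesis
  proof (cases "r = 0 \<and> L \<noteq> [] \<and> fst (hd L)")
    case True
    then obtain r1 L' where L: "L = (True, r1) # L'" by (cases L) auto
    have "k = 3 * q" using k True by simp
    then show ?thesis using c1[OF _ L] L tinv_eq1 by simp
  next
    case False
    then show ?thesis using c2[OF k r False] tinv_eq2[OF r False] k by simp
  qed
qed

lemma adm_cons_iff: "adm ((e, r) # L) \<longleftrightarrow> okr (e, r) \<and> (r = 0 \<longrightarrow> L = [] \<or> fst (hd L) = e) \<and> adm L"
  by (cases L) auto

lemma tmove_adm: "adm L \<Longrightarrow> adm (snd (tmove (k, L)))"
  by (rule tmove_cases) (auto simp: okr_def split: list.splits)

lemma tinv_adm: "adm L \<Longrightarrow> adm (snd (tinv (k, L)))"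
  by (rule tinv_cases) (auto simp: okr_def split: list.splits)

lemma tinv_tmove: "adm L \<Longrightarrow> tinv (tmove (k, L)) = (k, L)"
proof (rule tmove_cases)
  fix q r1 L' assume a: "adm L" and k: "k = 2 * q" and L: "L = (False, r1) # L'"
  have r1: "r1 \<in> {-1,0,1}" "\<not> (r1 = 0 \<and> L' \<noteq> [] \<and> fst (hd L'))"
    using a L by (auto simp: okr_def split: list.splits)
  show "tinv (3 * q + r1, L') = (k, L)" using tinv_eq2[OF r1] k L by simp
next
  fix q r assume a: "adm L" and k: "k = 2 * q + r" and r: "r \<in> {0,1}"
  show "tinv (3 * q, (True, r) # L) = (k, L)" using tinv_eq1 k by simp
qed

lemma tmove_tinv: "adm L \<Longrightarrow> tmove (tinv (k, L)) = (k, L)"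
proof (rule tinv_cases)
  fix q r1 L' assume a: "adm L" and k: "k = 3 * q" and L: "L = (True, r1) # L'"
  have r1: "r1 \<in> {0,1}" "\<not> (r1 = 0 \<and> L' \<noteq> [] \<and> \<not> fst (hd L'))"
    using a L by (auto simp: okr_def split: list.splits)
  show "tmove (2 * q + r1, L') = (k, L)" using tmove_eq2[OF r1] k L by simp
next
  fix q r assume a: "adm L" and k: "k = 3 * q + r" and r: "r \<in> {-1,0,1}"
  show "tmove (2 * q, (False, r) # L) = (k, L)" using tmove_eq1 k by simp
qed

lemma actl_adm: "adm (snd s) \<Longrightarrow> adm (snd (actl x s))"
proof -
  assume a: "adm (snd s)"
  obtain k L where s: "s = (k, L)" by (cases s)
  obtain g b where x: "x = (g, b)" by (cases x)
  show ?thesis using a tmove_adm tinv_adm unfolding s x by (cases g; cases b) auto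
qed

lemma act_adm: "adm (snd s) \<Longrightarrow> adm (snd (act w s))"
  by (induction w arbitrary: s) (auto simp: act_def intro: actl_adm)

lemma actl_inv: "adm (snd s) \<Longrightarrow> actl x (actl (inv_letter x) s) = s"
proof -
  assume a: "adm (snd s)"
  obtain k L where s: "s = (k, L)" by (cases s)
  obtain g b where x: "x = (g, b)" by (cases x)
  show ?thesis using a tinv_tmove tmove_tinv unfolding s x by (cases g; cases b) (auto simp: inv_letter_def)
qed

lemma actl_inv2: "adm (snd s) \<Longrightarrow> actl (inv_letter x) (actl x s) = s"
proof -
  assume a: "adm (snd s)"
  obtain k L where s: "s = (k, L)" by (cases s)
  obtain g b where x: "x = (g, b)" by (cases x)
  show ?thesis using a tinv_tmove tmove_tinv unfolding s x by (cases g; cases b) (auto simp: inv_letter_def)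
qed

lemma act_inv_word: "adm (snd s) \<Longrightarrow> act (inv_word w) (act w s) = s"
proof (induction w arbitrary: s)
  case Nil then show ?case by (simp add: act_def inv_word_def)
next
  case (Cons x w)
  have "act (inv_word (x # w)) (act (x # w) s) = act (inv_word w) (actl (inv_letter x) (actl x (act w s)))"
    by (simp add: inv_word_def act_def)
  also have "\<dots> = act (inv_word w) (act w s)" using Cons.prems act_adm actl_inv2 by metis
  also have "\<dots> = s" using Cons by blast
  finally show ?case .
qed

lemma act_rel: "adm L \<Longrightarrow> act bs_relator (k, L) = (k, L)"
proof -
  assume a: "adm L"
  have e: "act bs_relator (k, L) = tmove (fst (tinv (k - 3, L)) + 2, snd (tinv (k - 3, L)))"
    by (cases "tinv (k - 3, L)") (simp add: act_def bs_relator_def add.commute)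
  obtain q r where qr: "k - 3 = 3 * q + r" "r \<in> {-1,0,1}"
  proof
    show "k - 3 = 3 * ((k - 2) div 3) + (k - 3 - 3 * ((k - 2) div 3))" by simp
    show "k - 3 - 3 * ((k - 2) div 3) \<in> {-1,0,1}" by auto
  qed
  show ?thesis
  proof (cases "r = 0 \<and> L \<noteq> [] \<and> fst (hd L)")
    case True
    then obtain r1 L' where L: "L = (True, r1) # L'" "r = 0" by (cases L) auto
    have r1: "r1 \<in> {0,1}" "\<not> (r1 = 0 \<and> L' \<noteq> [] \<and> \<not> fst (hd L'))"
      using a L by (auto simp: okr_def split: list.splits)
    have "tinv (k - 3, L) = (2 * q + r1, L')" using qr L tinv_eq1 by simp
    then have "act bs_relator (k, L) = tmove (2 * (q + 1) + r1, L')" using e by (simp add: algebra_simps)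
    also have "\<dots> = (3 * (q + 1), (True, r1) # L')" using tmove_eq2[OF r1] by blast
    finally show ?thesis using qr L by simp
  next
    case False
    have "tinv (k - 3, L) = (2 * q, (False, r) # L)" using qr tinv_eq2[OF qr(2) False] by simp
    then have "act bs_relator (k, L) = tmove (2 * (q + 1), (False, r) # L)" using e by (simp add: algebra_simps)
    also have "\<dots> = (3 * (q + 1) + r, L)" by (rule tmove_eq1)
    finally show ?thesis using qr by simp
  qed
qed

lemma act_triv: "r \<in> bs_trivial \<Longrightarrow> adm (snd s) \<Longrightarrow> act r s = s"
proof -
  assume r: "r \<in> bs_trivial" and a: "adm (snd s)"
  have R: "act bs_relator s = s" using a act_rel by (cases s) auto
  show ?thesis using r
  proof (auto simp: bs_trivial_def)
    fix x show "act [x, inv_letter x] s = s" using a actl_inv by (simp add: act_def)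
  next
    show "act bs_relator s = s" by (rule R)
  next
    show "act (inv_word bs_relator) s = s" using act_inv_word[OF a, of bs_relator] R by simp
  qed
qed

lemma bs_eq_act: "bs_eq u v \<Longrightarrow> adm (snd s) \<Longrightarrow> act u s = act v s"
proof (induction arbitrary: s rule: bs_eq.induct)
  case (bs_del r u v)
  then show ?case using act_triv act_adm by (simp add: act_append)
qed auto



definition apow :: "int \<Rightarrow> word" where
  "apow r = replicate (nat \<bar>r\<bar>) (A, r > 0)"

fun word_of :: "(bool \<times> int) list \<Rightarrow> word" where
  "word_of [] = []"
| "word_of ((e, r) # L) = (T, e) # apow r @ word_of L"

lemma act_apow: "act (apow r) (k, L) = (k + r, L)"
proof -
  have "act (replicate n (A, b)) (k, L) = (if b then k + int n else k - int n, L)" for n b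
    by (induction n) (auto simp: act_def)
  then show ?thesis by (auto simp: apow_def)
qed

lemma act_word_of_step:
  assumes ok: "okr (e, r)" and nz: "r = 0 \<longrightarrow> (L = [] \<or> fst (hd L) = e)"
  shows "actl (T, e) (r, L) = (0, (e, r) # L)"
proof (cases e)
  case True
  have r: "r \<in> {0,1}" using ok True by (simp add: okr_def)
  have c: "\<not> (r = 0 \<and> L \<noteq> [] \<and> \<not> fst (hd L))" using nz True by blast
  have "tmove (2 * 0 + r, L) = (3 * 0, (True, r) # L)" by (rule tmove_eq2[OF r c])
  then show ?thesis using True by simp
next
  case False
  have r: "r \<in> {-1,0,1}" using ok False by (simp add: okr_def)
  have c: "\<not> (r = 0 \<and> L \<noteq> [] \<and> fst (hd L))" using nz False by blast
  have "tinv (3 * 0 + r, L) = (2 * 0, (False, r) # L)" by (rule tinv_eq2[OF r c])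
  then show ?thesis using False by simp
qed

lemma act_word_of: "adm L \<Longrightarrow> act (word_of L) (0, []) = (0, L)"
proof (induction L)
  case Nil then show ?case by (simp add: act_def)
next
  case (Cons x L)
  obtain e r where x: "x = (e, r)" by (cases x)
  have a: "adm ((e, r) # L)" using Cons.prems x by simp
  have aL: "adm L" and ok: "okr (e, r)" and nz: "r = 0 \<longrightarrow> (L = [] \<or> fst (hd L) = e)"
    using a unfolding adm_cons_iff by blast+
  have "act (word_of (x # L)) (0, []) = actl (T, e) (act (apow r) (act (word_of L) (0, [])))"
    unfolding x act_def by simp
  also have "act (word_of L) (0, []) = (0, L)" using Cons.IH[OF aL] .
  also have "act (apow r) (0, L) = (r, L)" using act_apow[of r 0 L] by simp
  also have "actl (T, e) (r, L) = (0, (e, r) # L)" by (rule act_word_of_step[OF ok nz])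
  finally show ?case using x by simp
qed

definition dup :: "(bool \<times> int) list \<Rightarrow> (bool \<times> int) list" where
  "dup L = (case L of [] \<Rightarrow> [(True, 0)] | y # _ \<Rightarrow> (fst y, 0) # L)"

fun F :: "nat \<Rightarrow> (bool \<times> int) list set" where
  "F 0 = {[]}"
| "F (Suc 0) = {[(True, 0)]}"
| "F (Suc (Suc n)) = dup ` F (Suc n) \<union> (((#) (True, 1)) ` F n \<union> (((#) (False, 1)) ` F n \<union> ((#) (False, -1)) ` F n))"

lemma F_props: "L \<in> F n \<Longrightarrow> adm L \<and> length (word_of L) = n"
proof (induction n arbitrary: L rule: F.induct)
  case 1 then show ?case by simp
next
  case 2 then show ?case by (simp add: okr_def apow_def)
next
  case (3 n)
  have ap0: "apow 0 = []" and ap1: "length (apow 1) = 1" and ap2: "length (apow (-1)) = 1"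
    by (simp_all add: apow_def)
  from "3.prems" consider (d) L' where "L' \<in> F (Suc n)" "L = dup L'"
    | (c) L' x where "L' \<in> F n" "L = x # L'" "x \<in> {(True,1),(False,1),(False,-1)}"
    by auto
  then show ?case
  proof cases
    case d
    have ih: "adm L' \<and> length (word_of L') = Suc n" using "3.IH" d(1) by blast
    obtain e where dL: "dup L' = (e, 0) # L'" and nz: "L' = [] \<or> fst (hd L') = e"
      by (cases L') (auto simp: dup_def)
    have "adm ((e, 0) # L')" using ih nz unfolding adm_cons_iff by (simp add: okr_def)
    moreover have "length (word_of ((e, 0) # L')) = Suc (Suc n)" using ih ap0 by simp
    ultimately show ?thesis using d dL by simp
  next
    case c
    have ih: "adm L' \<and> length (word_of L') = n" using "3.IH" c(1) by blast
    obtain e r where x: "x = (e, r)" by (cases x)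
    have r: "r \<noteq> 0" "length (apow r) = 1" "okr (e, r)"
      using c(3) x ap1 ap2 by (auto simp: okr_def)
    have "adm ((e, r) # L')" using ih r unfolding adm_cons_iff by simp
    moreover have "length (word_of ((e, r) # L')) = Suc (Suc n)" using ih r by simp
    ultimately show ?thesis using c x by simp
  qed
qed

lemma F_finite: "finite (F n)"
  by (induction n rule: F.induct) auto

lemma dup_inj: "inj dup"
  by (auto simp: inj_def dup_def split: list.splits)

lemma F_card: "card (F (Suc (Suc n))) = card (F (Suc n)) + 3 * card (F n)"
proof -
  have fin: "finite (F m)" for m by (rule F_finite)
  have i: "inj ((#) x)" for x :: "bool \<times> int" by (auto simp: inj_def)
  have c1: "card (dup ` F (Suc n)) = card (F (Suc n))" using dup_inj by (simp add: card_image inj_on_def inj_def)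
  have c2: "card (((#) x) ` F n) = card (F n)" for x using i by (simp add: card_image inj_on_def inj_def)
  have d: "dup L \<noteq> x # L'" if "snd x \<noteq> 0" for L L' x using that by (auto simp: dup_def split: list.splits)
  have "card (dup ` F (Suc n) \<union> (((#) (True, 1)) ` F n \<union> (((#) (False, 1)) ` F n \<union> ((#) (False, -1)) ` F n)))
     = card (dup ` F (Suc n)) + (card (((#) (True, 1)) ` F n) + (card (((#) (False, 1)) ` F n) + card (((#) (False, -1)) ` F n)))"
    apply (subst card_Un_disjoint, simp add: fin, simp add: fin)
    using d apply fastforce
    apply (subst card_Un_disjoint, simp add: fin, simp add: fin, fastforce)
    apply (subst card_Un_disjoint, simp add: fin, simp add: fin, fastforce)
    by simp
  then show ?thesis using c1 c2 by simp
qed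

definition rr :: real where "rr = (1 + sqrt 13) / 2"

lemma rr_sq: "rr ^ 2 = rr + 3"
  by (simp add: rr_def power2_eq_square field_simps)

lemma rr_pos: "rr > 1"
proof -
  have "sqrt 13 > 1" by simp
  then show ?thesis by (simp add: rr_def)
qed

lemma F_lower: "real (card (F n)) * rr \<ge> rr ^ n \<and> real (card (F (Suc n))) * rr \<ge> rr ^ Suc n"
proof (induction n)
  case 0 then show ?case using rr_pos by simp
next
  case (Suc n)
  have c: "real (card (F (Suc (Suc n)))) = real (card (F (Suc n))) + 3 * real (card (F n))"
    using F_card[of n] by (metis of_nat_add of_nat_mult of_nat_numeral)
  have "real (card (F (Suc (Suc n)))) * rr = real (card (F (Suc n))) * rr + 3 * (real (card (F n)) * rr)"
    unfolding c by (simp add: algebra_simps del: F.simps)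
  also have "\<dots> \<ge> rr ^ Suc n + 3 * rr ^ n" using Suc by linarith
  also have "rr ^ Suc n + 3 * rr ^ n = rr ^ n * (rr + 3)" by (simp add: algebra_simps)
  also have "\<dots> = rr ^ Suc (Suc n)" by (simp add: rr_sq[symmetric] power2_eq_square)
  finally show ?case using Suc by simp
qed

abbreviation cls :: "word \<Rightarrow> word set" where "cls w \<equiv> bs_rel `` {w}"

lemma equiv_bs: "equiv UNIV bs_rel"
  unfolding equiv_def refl_on_def sym_def trans_def bs_rel_def
  by (auto intro: bs_eq.intros)

lemma cls_eq_iff: "cls u = cls v \<longleftrightarrow> bs_eq u v"
  using eq_equiv_class_iff[OF equiv_bs] by (simp add: bs_rel_def)

lemma in_cls: "v \<in> cls u \<longleftrightarrow> bs_eq u v"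
  by (simp add: bs_rel_def)

lemma self_cls: "w \<in> cls w"
  by (simp add: bs_rel_def bs_eq.bs_refl)

lemma cls_in: "cls w \<in> BS23"
  by (simp add: BS23_def quotientI)

lemma BS23_E: "x \<in> BS23 \<Longrightarrow> \<exists>w. x = cls w"
  by (auto simp: BS23_def quotient_def)

lemma len_le: "bs_word_length (cls w) \<le> length w"
  unfolding bs_word_length_def by (rule Least_le) (use self_cls in blast)

lemma len_attained: "x \<in> BS23 \<Longrightarrow> \<exists>w. x = cls w \<and> length w = bs_word_length x"
proof -
  assume "x \<in> BS23"
  then obtain w0 where x: "x = cls w0" using BS23_E by blast
  have "\<exists>k. \<exists>w\<in>x. length w = k" using x self_cls by blast
  then have "\<exists>w\<in>x. length w = bs_word_length x" unfolding bs_word_length_def by (rule LeastI_ex)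
  then obtain w where w: "w \<in> x" "length w = bs_word_length x" by blast
  have "bs_eq w0 w" using w(1) x by (simp add: bs_rel_def)
  then have "x = cls w" using x cls_eq_iff by simp
  then show ?thesis using w by blast
qed

definition Sb :: "nat \<Rightarrow> word set set" where
  "Sb n = {x \<in> BS23. bs_word_length x \<le> n}"

lemma Sb_eq: "Sb n = cls ` {w. length w \<le> n}"
proof
  show "Sb n \<subseteq> cls ` {w. length w \<le> n}"
  proof
    fix x assume "x \<in> Sb n"
    then obtain w where "x = cls w" "length w = bs_word_length x" "bs_word_length x \<le> n"
      using len_attained by (auto simp: Sb_def)
    then show "x \<in> cls ` {w. length w \<le> n}" by auto
  qed
next
  show "cls ` {w. length w \<le> n} \<subseteq> Sb n"
  proof
    fix x assume "x \<in> cls ` {w. length w \<le> n}"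
    then obtain w where x: "x = cls w" and w: "length w \<le> n" by blast
    have "bs_word_length x \<le> n" using len_le[of w] w unfolding x by linarith
    then show "x \<in> Sb n" using cls_in x by (simp add: Sb_def)
  qed
qed

instance gen :: finite
proof
  have u: "(UNIV :: gen set) = {A, T}" using gen.exhaust by auto
  show "finite (UNIV :: gen set)" unfolding u by simp
qed

lemma Sb_finite: "finite (Sb n)"
proof -
  have "finite {w :: word. length w \<le> n}"
    using finite_lists_length_le[OF finite_UNIV, of n] by simp
  then show ?thesis by (simp add: Sb_eq)
qed

lemma growth_Sb: "bs_growth n = card (Sb n)"
  by (simp add: bs_growth_def Sb_def)

lemma growth_pos: "bs_growth n \<ge> 1"
proof -
  have "cls [] \<in> Sb n" by (simp add: Sb_eq)
  then show ?thesis using Sb_finite growth_Sb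
    by (metis One_nat_def Suc_leI card_gt_0_iff empty_iff)
qed

lemma growth_lower: "real (bs_growth n) * rr \<ge> rr ^ n"
proof -
  have sub: "(cls \<circ> word_of) ` F n \<subseteq> Sb n"
    using F_props len_le cls_in by (auto simp: Sb_def)
  have inj: "inj_on (cls \<circ> word_of) (F n)"
  proof (rule inj_onI)
    fix L L' assume L: "L \<in> F n" "L' \<in> F n" "(cls \<circ> word_of) L = (cls \<circ> word_of) L'"
    then have "bs_eq (word_of L) (word_of L')" by (simp add: cls_eq_iff)
    then have "act (word_of L) (0, []) = act (word_of L') (0, [])" by (rule bs_eq_act) simp
    then show "L = L'" using L F_props act_word_of by simp
  qed
  have "card (F n) \<le> card (Sb n)"
    using card_inj_on_le[OF inj sub Sb_finite] .
  then have "real (card (F n)) * rr \<le> real (bs_growth n) * rr"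
    using rr_pos by (simp add: growth_Sb)
  then show ?thesis using F_lower[of n] by linarith
qed

lemma bs_eq_app_right: "bs_eq u v \<Longrightarrow> bs_eq (u @ w) (v @ w)"
proof (induction rule: bs_eq.induct)
  case (bs_del r u v) then show ?case using bs_eq.bs_del[of r u "v @ w"] by simp
qed (auto intro: bs_eq.intros)

lemma bs_eq_app_left: "bs_eq u v \<Longrightarrow> bs_eq (w @ u) (w @ v)"
proof (induction rule: bs_eq.induct)
  case (bs_del r u v) then show ?case using bs_eq.bs_del[of r "w @ u" v] by simp
qed (auto intro: bs_eq.intros)

lemma growth_submult: "bs_growth (m + n) \<le> bs_growth m * bs_growth n"
proof -
  define rep where "rep X = (SOME w. w \<in> X)" for X :: "word set"
  have rep: "bs_eq u (rep (cls u))" for u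
  proof -
    have "u \<in> cls u" by (rule self_cls)
    then have "rep (cls u) \<in> cls u" unfolding rep_def by (rule someI)
    then show ?thesis by (simp add: bs_rel_def)
  qed
  define f where "f p = cls (rep (fst p) @ rep (snd p))" for p
  have "Sb (m + n) \<subseteq> f ` (Sb m \<times> Sb n)"
  proof
    fix x assume "x \<in> Sb (m + n)"
    then obtain w where x: "x = cls w" and lw: "length w \<le> m + n" by (auto simp: Sb_eq)
    define u where "u = take m w"
    define v where "v = drop m w"
    have w: "w = u @ v" by (simp add: u_def v_def)
    have "length u \<le> m" "length v \<le> n" using lw by (auto simp: u_def v_def)
    then have mem: "(cls u, cls v) \<in> Sb m \<times> Sb n" by (auto simp: Sb_eq)
    have "bs_eq (u @ v) (rep (cls u) @ v)" by (rule bs_eq_app_right[OF rep])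
    moreover have "bs_eq (rep (cls u) @ v) (rep (cls u) @ rep (cls v))" by (rule bs_eq_app_left[OF rep])
    ultimately have "bs_eq w (rep (cls u) @ rep (cls v))" using w bs_eq.bs_trans by blast
    then have "x = f (cls u, cls v)" by (simp add: f_def x cls_eq_iff)
    then show "x \<in> f ` (Sb m \<times> Sb n)" using mem by blast
  qed
  then have "card (Sb (m + n)) \<le> card (f ` (Sb m \<times> Sb n))"
    by (intro card_mono) (auto simp: Sb_finite)
  also have "\<dots> \<le> card (Sb m \<times> Sb n)" by (rule card_image_le) (simp add: Sb_finite)
  finally show ?thesis by (simp add: growth_Sb card_cartesian_product)
qed



lemma subadd_iter:
  fixes u :: "nat \<Rightarrow> real"
  assumes sa: "\<And>m n. u (m + n) \<le> u m + u n"
  shows "u (q * m + r) \<le> real q * u m + u r"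
proof (induction q)
  case 0 then show ?case by simp
next
  case (Suc q)
  have "u (Suc q * m + r) = u (m + (q * m + r))" by (simp add: algebra_simps)
  also have "\<dots> \<le> u m + u (q * m + r)" by (rule sa)
  also have "\<dots> \<le> u m + (real q * u m + u r)" using Suc by simp
  finally show ?case by (simp add: algebra_simps)
qed

lemma fekete:
  fixes u :: "nat \<Rightarrow> real"
  assumes sa: "\<And>m n. u (m + n) \<le> u m + u n" and nn: "\<And>n. u n \<ge> 0"
  shows "(\<lambda>n. u n / real n) \<longlonglongrightarrow> (INF n\<in>{1..}. u n / real n)"
proof -
  define l where "l = (INF n\<in>{1..}. u n / real n)"
  have bdd: "bdd_below ((\<lambda>n. u n / real n) ` {1..})"
    by (rule bdd_belowI[of _ 0]) (auto simp: nn)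
  have low: "l \<le> u n / real n" if "n \<ge> 1" for n
    unfolding l_def using bdd that by (intro cINF_lower) auto
  show ?thesis unfolding l_def[symmetric]
  proof (rule LIMSEQ_I)
    fix e :: real assume e: "e > 0"
    have "\<exists>m\<in>{1..}. u m / real m < l + e / 2"
      unfolding l_def using bdd e by (subst cINF_less_iff[symmetric]) (auto simp: l_def)
    then obtain m where m: "m \<ge> 1" "u m / real m < l + e / 2" by auto
    define C where "C = (\<Sum>r<m. u r)"
    have C: "u r \<le> C" if "r < m" for r
      unfolding C_def using that nn by (intro member_le_sum) auto
    have C0: "C \<ge> 0" unfolding C_def using nn by (simp add: sum_nonneg)
    obtain N :: nat where N: "real N > 2 * C / e" using reals_Archimedean2 by blast
    show "\<exists>no. \<forall>n\<ge>no. norm (u n / real n - l) < e"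
    proof (intro exI[of _ "Suc N"] allI impI)
      fix n assume n: "n \<ge> Suc N"
      then have npos: "real n > 0" by simp
      define q where "q = n div m"
      define r where "r = n mod m"
      have nqr: "n = q * m + r" by (simp add: q_def r_def)
      have rm: "r < m" using m by (simp add: r_def)
      have qm: "real q * real m \<le> real n" using nqr by (metis le_add1 of_nat_le_iff of_nat_mult)
      have "u n \<le> real q * u m + u r" using subadd_iter[OF sa] nqr by metis
      also have "real q * u m = real q * real m * (u m / real m)" using m by simp
      also have "\<dots> \<le> real n * (u m / real m)"
        using qm nn[of m] m by (intro mult_right_mono) auto
      finally have "u n \<le> real n * (u m / real m) + C" using C[OF rm] by linarith
      then have "u n / real n \<le> u m / real m + C / real n"
        using npos by (simp add: field_simps)
      moreover have "C / real n < e / 2"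
      proof -
        have "2 * C < e * real N" using N e by (simp add: field_simps)
        also have "\<dots> \<le> e * real n" using n e by simp
        finally show ?thesis using npos by (simp add: field_simps)
      qed
      moreover have "l \<le> u n / real n" using low n by simp
      ultimately have "u n / real n - l < e" "0 \<le> u n / real n - l" using m(2) by linarith+
      then show "norm (u n / real n - l) < e" by simp
    qed
  qed
qed

theorem proposition5p2:
  shows "\<exists>L. (\<lambda>n. real (bs_growth n) powr (1 / real n)) \<longlonglongrightarrow> L
             \<and> L \<ge> (1 + sqrt 13) / 2"
proof -
  define u where "u n = ln (real (bs_growth n))" for n
  have gpos: "real (bs_growth n) > 0" for n using growth_pos[of n] by simp
  have sa: "u (m + n) \<le> u m + u n" for m n
  proof -
    have "real (bs_growth (m + n)) \<le> real (bs_growth m) * real (bs_growth n)"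
      using growth_submult[of m n] by (metis of_nat_le_iff of_nat_mult)
    then have "ln (real (bs_growth (m + n))) \<le> ln (real (bs_growth m) * real (bs_growth n))"
      using gpos by simp
    then show ?thesis using gpos by (simp add: u_def ln_mult)
  qed
  have nn: "u n \<ge> 0" for n using growth_pos[of n] by (simp add: u_def)
  define l where "l = (INF n\<in>{1..}. u n / real n)"
  have lim: "(\<lambda>n. u n / real n) \<longlonglongrightarrow> l" unfolding l_def by (rule fekete[OF sa nn])
  have eq: "real (bs_growth n) powr (1 / real n) = exp (u n / real n)" for n
    using gpos[of n] by (simp add: powr_def u_def)
  have lim2: "(\<lambda>n. real (bs_growth n) powr (1 / real n)) \<longlonglongrightarrow> exp l"
    unfolding eq by (intro tendsto_exp lim)
  have lim3: "(\<lambda>n. ln rr - ln rr / real n) \<longlonglongrightarrow> ln rr - 0"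
    by (intro tendsto_diff tendsto_const lim_const_over_n)
  have le: "ln rr - ln rr / real n \<le> u n / real n" if "n \<ge> 1" for n
  proof -
    have "rr ^ n \<le> real (bs_growth n) * rr" by (rule growth_lower)
    moreover have "0 < rr ^ n" using rr_pos by simp
    moreover have "0 < real (bs_growth n) * rr" using rr_pos gpos[of n] by simp
    ultimately have "ln (rr ^ n) \<le> ln (real (bs_growth n) * rr)" by (simp only: ln_le_cancel_iff)
    then have "real n * ln rr \<le> u n + ln rr" using rr_pos gpos[of n]
      by (simp add: ln_mult ln_realpow u_def)
    then have h: "real n * ln rr - ln rr \<le> u n" by linarith
    have "ln rr - ln rr / real n = (real n * ln rr - ln rr) / real n" using that by (simp add: field_simps)
    also have "\<dots> \<le> u n / real n" using h by (intro divide_right_mono) auto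
    finally show ?thesis .
  qed
  have "ln rr - 0 \<le> l"
    by (rule LIMSEQ_le[OF lim3 lim]) (use le in auto)
  then have "exp (ln rr) \<le> exp l" by simp
  then have "rr \<le> exp l" using rr_pos by simp
  then show ?thesis using lim2 by (auto simp: rr_def)
qed

end
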